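(* Let $N\geq 2$, $1\leq k<N$ be integers and assume $0<p<\frac 2k$. Then for any uniformly continuous, nonnegative and nontrivial $u_0:\mathbb R^N\to\mathbb R$, the solution of $$\partial_t u=\mathcal P_k^+ u+u^{1+p}\ \text{ in }(0,+\infty)\times\mathbb R^N,\qquad u(0,\cdot)=u_0,$$ blows up in finite time.
   Context: For $u:\mathbb R^N\to\mathbb R$, let $\lambda_1(D^2u)\leq\cdots\leq\lambda_N(D^2u)$ be the eigenvalues of the Hessian $D^2u$ and $\mathcal P_k^+ u:=\sum_{i=N-k+1}^N\lambda_i(D^2u)$. For uniformly continuous initial data the Cauchy problem is locally well-posed in time in the viscosity sense (with a comparison principle); "blows up in finite time" means the viscosity solution does not exist globally in time (it cannot be continued for all $t>0$). *)

theory Defs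
  imports "HOL-Analysis.Analysis"
begin

definition sorted_eigs :: "real^'n^'n \<Rightarrow> (nat \<Rightarrow> real) \<Rightarrow> bool" where
  "sorted_eigs X lam \<longleftrightarrow>
     (\<forall>i j. i \<le> j \<longrightarrow> j < CARD('n) \<longrightarrow> lam i \<le> lam j) \<and>
     (\<forall>i\<ge>CARD('n). lam i = 0) \<and>
     (\<forall>t. det (t *\<^sub>R mat 1 - X) = (\<Prod>i<CARD('n). t - lam i))"

text \<open>Pucci-type operator: sum of the k largest eigenvalues,
  lambda_{N-k+1} + ... + lambda_N in the paper's 1-based indexing.\<close>
definition Pplus :: "nat \<Rightarrow> real^'n^'n \<Rightarrow> real" where
  "Pplus k X = (THE s. \<exists>lam. sorted_eigs X lam \<and>
                   s = (\<Sum>i\<in>{CARD('n) - k..<CARD('n)}. lam i))"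

definition C12_test ::
  "(real \<Rightarrow> real^'n \<Rightarrow> real) \<Rightarrow> (real \<Rightarrow> real^'n \<Rightarrow> real) \<Rightarrow>
   (real \<Rightarrow> real^'n \<Rightarrow> real^'n) \<Rightarrow> (real \<Rightarrow> real^'n \<Rightarrow> real^'n^'n) \<Rightarrow> bool" where
  "C12_test phi phit Dphi H \<longleftrightarrow>
     (\<forall>t>0. \<forall>x.
        ((\<lambda>s. phi s x) has_real_derivative phit t x) (at t) \<and>
        ((phi t) has_derivative (\<lambda>h. Dphi t x \<bullet> h)) (at x) \<and>
        ((Dphi t) has_derivative (\<lambda>h. H t x *v h)) (at x)) \<and>
     continuous_on ({0<..} \<times> UNIV) (\<lambda>(t,x). phit t x) \<and>
     continuous_on ({0<..} \<times> UNIV) (\<lambda>(t,x). Dphi t x) \<and>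
     continuous_on ({0<..} \<times> UNIV) (\<lambda>(t,x). H t x)"

definition visc_sub :: "nat \<Rightarrow> real \<Rightarrow> (real \<Rightarrow> real^'n \<Rightarrow> real) \<Rightarrow> bool" where
  "visc_sub k p u \<longleftrightarrow>
     (\<forall>phi phit Dphi H t0 x0.
        C12_test phi phit Dphi H \<and> t0 > 0 \<and>
        (\<exists>e>0. \<forall>t x. dist (t, x) (t0, x0) < e \<longrightarrow> u t x - phi t x \<le> u t0 x0 - phi t0 x0)
        \<longrightarrow> phit t0 x0 \<le> Pplus k (H t0 x0) + u t0 x0 powr (1 + p))"

definition visc_super :: "nat \<Rightarrow> real \<Rightarrow> (real \<Rightarrow> real^'n \<Rightarrow> real) \<Rightarrow> bool" where
  "visc_super k p u \<longleftrightarrow>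
     (\<forall>phi phit Dphi H t0 x0.
        C12_test phi phit Dphi H \<and> t0 > 0 \<and>
        (\<exists>e>0. \<forall>t x. dist (t, x) (t0, x0) < e \<longrightarrow> u t x - phi t x \<ge> u t0 x0 - phi t0 x0)
        \<longrightarrow> phit t0 x0 \<ge> Pplus k (H t0 x0) + u t0 x0 powr (1 + p))"

text \<open>A global-in-time (nonnegative) viscosity solution of the Cauchy problem, in the
  well-posedness class: continuous on [0,\<infinity>) x R^N and uniformly continuous on each
  strip [0,T] x R^N.\<close>
definition global_solution ::
  "nat \<Rightarrow> real \<Rightarrow> (real^'n \<Rightarrow> real) \<Rightarrow> (real \<Rightarrow> real^'n \<Rightarrow> real) \<Rightarrow> bool" where
  "global_solution k p u0 u \<longleftrightarrow>
     continuous_on ({0..} \<times> UNIV) (\<lambda>(t,x). u t x) \<and>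
     (\<forall>T>0. uniformly_continuous_on ({0..T} \<times> UNIV) (\<lambda>(t,x). u t x)) \<and>
     (\<forall>t\<ge>0. \<forall>x. u t x \<ge> 0) \<and>
     (\<forall>x. u 0 x = u0 x) \<and>
     visc_sub k p u \<and> visc_super k p u"

end

theory Submission
  imports Defs "HOL-Computational_Algebra.Polynomial"
begin

definition PS :: "'n::finite set \<Rightarrow> real^'n \<Rightarrow> real^'n" where
  "PS S h = (\<chi> i. if i \<in> S then h$i else 0)"
definition DS :: "'n::finite set \<Rightarrow> real^'n^'n" where
  "DS S = (\<chi> i j. if i = j \<and> i \<in> S then 1 else 0)"
definition outer :: "real^'n::finite \<Rightarrow> real^'n \<Rightarrow> real^'n^'n" where
  "outer u v = (\<chi> i j. u$i * v$j)"

lemma DS_mult: "DS S *v h = PS S h"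
  by (simp add: DS_def PS_def matrix_vector_mult_def vec_eq_iff if_distrib[of "\<lambda>z. z * _"] sum.delta cong: if_cong)

lemma outer_mult: "outer u v *v h = (v \<bullet> h) *\<^sub>R u"
  by (simp add: outer_def matrix_vector_mult_def vec_eq_iff inner_vec_def sum_distrib_left mult.commute mult.left_commute)

lemma PS_add: "PS S (x + y) = PS S x + PS S y" by (simp add: PS_def vec_eq_iff)
lemma PS_diff: "PS S (x - y) = PS S x - PS S y" by (simp add: PS_def vec_eq_iff)
lemma PS_scale: "PS S (c *\<^sub>R x) = c *\<^sub>R PS S x" by (simp add: PS_def vec_eq_iff)
lemma PS_compl: "PS (-S) x = x - PS S x" by (simp add: PS_def vec_eq_iff)
lemma PS_inner: "PS S x \<bullet> y = x \<bullet> PS S y"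
  unfolding PS_def inner_vec_def by (rule sum.cong) auto
lemma PS_PS: "PS S (PS S x) = PS S x" by (simp add: PS_def vec_eq_iff)

lemma householder:
  fixes v :: "real^'n::finite"
  assumes "PS S v = v" "j \<in> S"
  shows "\<exists>Q::real^'n^'n. Q ** Q = mat 1 \<and> (\<forall>x y. (Q *v x) \<bullet> y = x \<bullet> (Q *v y))
     \<and> (\<forall>h. Q *v PS S h = PS S (Q *v h)) \<and> Q *v v = norm v *\<^sub>R axis j 1"
proof (cases "v - norm v *\<^sub>R axis j 1 = 0")
  case True
  show ?thesis by (rule exI[of _ "mat 1"]) (use True in auto)
next
  case False
  define n where "n = norm v"
  define e :: "real^'n" where "e = axis j 1"
  define w where "w = v - n *\<^sub>R e"
  have w0: "w \<noteq> 0" using False by (simp add: w_def n_def e_def)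
  have ww: "w \<bullet> w > 0" using w0 by simp
  define c where "c = 2 / (w \<bullet> w)"
  define Q where "Q = mat 1 - c *\<^sub>R outer w w"
  have Qx: "Q *v x = x - (c * (w \<bullet> x)) *\<^sub>R w" for x
    by (simp add: Q_def matrix_vector_mult_diff_rdistrib outer_mult scaleR_matrix_vector_assoc[symmetric])
  have cw: "c * (w \<bullet> w) = 2" using ww by (simp add: c_def)
  have ee: "e \<bullet> e = 1" by (simp add: e_def inner_axis_axis)
  have ev: "e \<bullet> v = v $ j" by (simp add: e_def inner_axis')
  have vv: "v \<bullet> v = n * n" by (simp add: n_def dot_square_norm power2_eq_square)
  have wwe: "w \<bullet> w = 2 * (n * n - n * v$j)"
    by (simp add: w_def inner_diff_left inner_diff_right ee ev vv inner_commute algebra_simps)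
  have wv: "w \<bullet> v = n * n - n * v$j"
    by (simp add: w_def inner_diff_left ev vv inner_commute algebra_simps)
  have PSw: "PS S w = w"
  proof -
    have "PS S e = e" using assms(2) by (simp add: PS_def e_def vec_eq_iff axis_def)
    thus ?thesis using assms(1) by (simp add: w_def PS_diff PS_scale)
  qed
  have "Q ** Q = mat 1"
    unfolding matrix_eq
  proof
    fix x
    have "w \<bullet> (Q *v x) = - (w \<bullet> x)"
      using cw by (simp add: Qx inner_diff_right algebra_simps)
    hence "Q *v (Q *v x) = x"
      by (simp add: Qx[of "Q *v x"]) (simp add: Qx)
    thus "(Q ** Q) *v x = mat 1 *v x"
      by (simp add: matrix_vector_mul_assoc[symmetric])
  qed
  moreover have "\<forall>x y. (Q *v x) \<bullet> y = x \<bullet> (Q *v y)"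
    by (simp add: Qx inner_diff_left inner_diff_right inner_commute)
  moreover have "\<forall>h. Q *v PS S h = PS S (Q *v h)"
  proof
    fix h
    have "w \<bullet> PS S h = w \<bullet> h" using PSw by (metis PS_inner)
    thus "Q *v PS S h = PS S (Q *v h)" by (simp add: Qx PS_diff PS_scale PSw)
  qed
  moreover have "Q *v v = norm v *\<^sub>R axis j 1"
  proof -
    have "w \<bullet> w = 2 * (w \<bullet> v)" using wwe wv by simp
    hence "c * (w \<bullet> v) = 1" using ww by (simp add: c_def)
    hence "Q *v v = v - w" by (simp add: Qx)
    thus ?thesis by (simp add: w_def n_def e_def)
  qed
  ultimately show ?thesis by blast
qed

definition Xmat :: "'n::finite set \<Rightarrow> real \<Rightarrow> real \<Rightarrow> real \<Rightarrow> real^'n \<Rightarrow> real^'n^'n" where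
  "Xmat S al ga be v = al *\<^sub>R DS S + ga *\<^sub>R DS (-S) + be *\<^sub>R outer v v"

lemma Xmat_mult: "Xmat S al ga be v *v h = al *\<^sub>R PS S h + ga *\<^sub>R PS (-S) h + (be * (v \<bullet> h)) *\<^sub>R v"
  by (simp add: Xmat_def matrix_vector_mult_add_rdistrib scaleR_matrix_vector_assoc[symmetric] DS_mult outer_mult)

lemma det_Xmat:
  fixes v :: "real^'n::finite"
  assumes "PS S v = v" "j \<in> S"
  shows "det (t *\<^sub>R mat 1 - Xmat S al ga be v) =
     (t - ga) ^ card (-S) * (t - al) ^ (card S - 1) * (t - al - be * (v \<bullet> v))"
proof -
  obtain Q :: "real^'n^'n" where QQ: "Q ** Q = mat 1" and Qs: "\<forall>x y. (Q *v x) \<bullet> y = x \<bullet> (Q *v y)"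
    and QP: "\<forall>h. Q *v PS S h = PS S (Q *v h)" and Qv: "Q *v v = norm v *\<^sub>R axis j 1"
    using householder[OF assms] by blast
  define M where "M = t *\<^sub>R mat 1 - Xmat S al ga be v"
  define d where "d i = (if i \<notin> S then t - ga else if i = j then t - al - be * (v \<bullet> v) else t - al)" for i
  define D :: "real^'n^'n" where "D = (\<chi> i i'. if i = i' then d i else 0)"
  have QQh: "Q *v (Q *v h) = h" for h
    by (simp add: matrix_vector_mul_assoc QQ)
  have Mh: "M *v y = t *\<^sub>R y - (al *\<^sub>R PS S y + ga *\<^sub>R PS (-S) y + (be * (v \<bullet> y)) *\<^sub>R v)" for y
    by (simp add: M_def matrix_vector_mult_diff_rdistrib scaleR_matrix_vector_assoc[symmetric] Xmat_mult)
  have "Q ** M ** Q = D"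
    unfolding matrix_eq
  proof
    fix h
    have 1: "Q *v PS S (Q *v h) = PS S h" using QP QQh by metis
    have 2: "Q *v PS (-S) (Q *v h) = PS (-S) h"
      by (simp add: PS_compl matrix_vector_mult_diff_distrib 1 QQh)
    have 3: "v \<bullet> (Q *v h) = norm v * h $ j"
    proof -
      have "v \<bullet> (Q *v h) = (Q *v v) \<bullet> h" using Qs by simp
      also have "\<dots> = norm v * h $ j" by (simp add: Qv inner_axis')
      finally show ?thesis .
    qed
    have "(Q ** M ** Q) *v h = Q *v (M *v (Q *v h))"
      by (simp add: matrix_vector_mul_assoc matrix_mul_assoc)
    also have "\<dots> = t *\<^sub>R h - (al *\<^sub>R PS S h + ga *\<^sub>R PS (-S) h + (be * (norm v * h $ j)) *\<^sub>R (norm v *\<^sub>R axis j 1))"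
      by (simp add: Mh matrix_vector_mult_diff_distrib matrix_vector_right_distrib matrix_vector_mult_scaleR 1 2 3 QQh Qv)
    also have "\<dots> = D *v h"
    proof -
      have Dh: "(D *v h) $ i = d i * h $ i" for i
      proof -
        have "(D *v h) $ i = (\<Sum>i'\<in>UNIV. (if i = i' then d i * h $ i' else 0))"
          by (simp add: D_def matrix_vector_mult_def if_distrib[of "\<lambda>z. z * _"] cong: if_cong)
        also have "\<dots> = d i * h $ i" by (simp add: sum.delta)
        finally show ?thesis .
      qed
      have nn: "norm v * norm v = v \<bullet> v" by (simp add: dot_square_norm power2_eq_square)
      show ?thesis
        unfolding vec_eq_iff
      proof
        fix i
        show "(t *\<^sub>R h - (al *\<^sub>R PS S h + ga *\<^sub>R PS (-S) h + (be * (norm v * h $ j)) *\<^sub>R (norm v *\<^sub>R axis j 1))) $ i = (D *v h) $ i"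
          unfolding Dh using assms(2) nn
          by (cases "i = j") (auto simp: d_def PS_def axis_def algebra_simps)
      qed
    qed
    finally show "(Q ** M ** Q) *v h = D *v h" .
  qed
  hence "det D = det Q * det M * det Q" by (simp add: det_mul[symmetric])
  also have "\<dots> = det (Q ** Q) * det M" by (simp add: det_mul)
  finally have dM: "det M = det D" by (simp add: QQ)
  have "det D = (\<Prod>i\<in>UNIV. d i)"
    by (subst det_diagonal) (auto simp: D_def)
  also have "\<dots> = (\<Prod>i\<in>-S. d i) * (\<Prod>i\<in>S. d i)"
    by (subst prod.union_disjoint[symmetric]) (auto simp: Compl_partition2)
  also have "(\<Prod>i\<in>-S. d i) = (t - ga) ^ card (-S)"
    by (simp add: d_def)
  also have "(\<Prod>i\<in>S. d i) = d j * (\<Prod>i\<in>S - {j}. d i)"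
    using assms(2) by (simp add: prod.remove)
  also have "(\<Prod>i\<in>S - {j}. d i) = (t - al) ^ (card S - 1)"
    using assms(2) by (simp add: d_def)
  finally show ?thesis using dM assms(2) by (simp add: M_def d_def)
qed


lemma sorted_prod_unique:
  fixes l l' :: "nat \<Rightarrow> real"
  shows "(\<forall>i j. i \<le> j \<longrightarrow> j < n \<longrightarrow> l i \<le> l j) \<Longrightarrow> (\<forall>i j. i \<le> j \<longrightarrow> j < n \<longrightarrow> l' i \<le> l' j) \<Longrightarrow>
    (\<Prod>i<n. [:-l i, 1:]) = (\<Prod>i<n. [:-l' i, 1:]) \<Longrightarrow> \<forall>i<n. l i = l' i"
proof (induction n)
  case 0
  then show ?case by simp
next
  case (Suc n)
  have e: "(\<Prod>i<n. [:-l i, 1:]) * [:-l n, 1:] = (\<Prod>i<n. [:-l' i, 1:]) * [:-l' n, 1:]"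
    using Suc.prems(3) unfolding prod.lessThan_Suc by simp
  have r1: "l n \<le> l' n"
  proof -
    have "poly ((\<Prod>i<n. [:-l' i, 1:]) * [:-l' n, 1:]) (l n) = 0"
      using e[symmetric] by (simp add: poly_prod)
    hence "\<exists>i<Suc n. l' i = l n"
      by (simp add: poly_prod prod_zero_iff) (metis lessThan_iff less_Suc_eq)
    then obtain i where "i < Suc n" "l' i = l n" by blast
    thus ?thesis using Suc.prems(2) by (metis less_Suc_eq_le lessI)
  qed
  have r2: "l' n \<le> l n"
  proof -
    have "poly ((\<Prod>i<n. [:-l i, 1:]) * [:-l n, 1:]) (l' n) = 0"
      using e by (simp add: poly_prod)
    hence "\<exists>i<Suc n. l i = l' n"
      by (simp add: poly_prod prod_zero_iff) (metis lessThan_iff less_Suc_eq)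
    then obtain i where "i < Suc n" "l i = l' n" by blast
    thus ?thesis using Suc.prems(1) by (metis less_Suc_eq_le lessI)
  qed
  have eqn: "l n = l' n" using r1 r2 by simp
  have "(\<Prod>i<n. [:-l i, 1:]) = (\<Prod>i<n. [:-l' i, 1:])"
  proof -
    have nz: "[:-l' n, 1:] \<noteq> 0" by simp
    show ?thesis using e unfolding eqn using nz mult_right_cancel by blast
  qed
  moreover have "\<forall>i j. i \<le> j \<longrightarrow> j < n \<longrightarrow> l i \<le> l j" using Suc.prems(1) by auto
  moreover have "\<forall>i j. i \<le> j \<longrightarrow> j < n \<longrightarrow> l' i \<le> l' j" using Suc.prems(2) by auto
  ultimately have "\<forall>i<n. l i = l' i" using Suc.IH by blast
  thus ?case using eqn less_Suc_eq by auto
qed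

lemma sorted_prod_unique':
  fixes l l' :: "nat \<Rightarrow> real"
  assumes "\<forall>i j. i \<le> j \<longrightarrow> j < n \<longrightarrow> l i \<le> l j" "\<forall>i j. i \<le> j \<longrightarrow> j < n \<longrightarrow> l' i \<le> l' j"
    "\<forall>t. (\<Prod>i<n. t - l i) = (\<Prod>i<n. t - l' i)"
  shows "\<forall>i<n. l i = l' i"
proof -
  have "poly (\<Prod>i<n. [:-l i, 1:]) = poly (\<Prod>i<n. [:-l' i, 1:])"
    using assms(3) by (simp add: poly_prod fun_eq_iff)
  hence "(\<Prod>i<n. [:-l i, 1:]) = (\<Prod>i<n. [:-l' i, 1:])" by (simp add: poly_eq_poly_eq_iff)
  thus ?thesis using sorted_prod_unique assms(1,2) by blast
qed


lemma Pplus_Xmat: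
  fixes v :: "real^'n::finite"
  assumes S: "card S = k" "1 \<le> k" "k < CARD('n)" and v: "PS S v = v" and ord: "ga \<le> al" "0 \<le> be"
  shows "Pplus k (Xmat S al ga be v) = k * al + be * (v \<bullet> v)"
proof -
  define N where "N = CARD('n)"
  define X where "X = Xmat S al ga be v"
  define lam where "lam i = (if i < N - k then ga else if i < N - 1 then al else if i = N - 1 then al + be * (v \<bullet> v) else 0)" for i
  have vv: "0 \<le> v \<bullet> v" by simp
  have kN: "k < N" "1 \<le> k" using S by (auto simp: N_def)
  have "S \<noteq> {}" using S by auto
  then obtain j where j: "j \<in> S" by blast
  have sorted: "\<forall>i j. i \<le> j \<longrightarrow> j < N \<longrightarrow> lam i \<le> lam j"
  proof -
    have bvv: "0 \<le> be * (v \<bullet> v)" using ord vv by simp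
    show ?thesis unfolding lam_def using ord(1) bvv kN
      by (auto simp del: zero_le_mult_iff split: if_splits)
  qed
  have lN: "lam (N - 1) = al + be * (v \<bullet> v)"
  proof -
    have "\<not> (N - 1 < N - k)" using kN by arith
    thus ?thesis unfolding lam_def by simp
  qed
  have prodlam: "(\<Prod>i<N. t - lam i) = (t - ga) ^ (N - k) * (t - al) ^ (k - 1) * (t - al - be * (v \<bullet> v))" for t
  proof -
    have N1: "N = Suc (N - 1)" using kN by simp
    have "(\<Prod>i<N. t - lam i) = (\<Prod>i<N - 1. t - lam i) * (t - lam (N - 1))"
      by (subst N1) (simp only: prod.lessThan_Suc diff_Suc_1)
    also have "(\<Prod>i<N - 1. t - lam i) = (\<Prod>i\<in>{0..<N-k}. t - lam i) * (\<Prod>i\<in>{N-k..<N-1}. t - lam i)"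
      using kN by (simp add: lessThan_atLeast0 prod.atLeastLessThan_concat)
    also have "(\<Prod>i\<in>{0..<N-k}. t - lam i) = (t - ga) ^ (N - k)"
      by (simp add: lam_def)
    also have "(\<Prod>i\<in>{N-k..<N-1}. t - lam i) = (t - al) ^ (k - 1)"
      using kN by (simp add: lam_def)
    finally show ?thesis unfolding lN by (simp add: algebra_simps)
  qed
  have eig: "sorted_eigs X lam"
    unfolding sorted_eigs_def
  proof (intro conjI)
    show "\<forall>i j. i \<le> j \<longrightarrow> j < CARD('n) \<longrightarrow> lam i \<le> lam j" using sorted by (simp add: N_def)
    show "\<forall>i\<ge>CARD('n). lam i = 0"
    proof (intro allI impI)
      fix i assume "CARD('n) \<le> i"
      hence "N \<le> i" by (simp add: N_def)
      thus "lam i = 0" using kN unfolding lam_def by auto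
    qed
    have cS: "card (-S) = N - k"
    proof -
      have "-S = UNIV - S" by auto
      thus ?thesis using S by (simp add: N_def card_Diff_subset)
    qed
    show "\<forall>t. det (t *\<^sub>R mat 1 - X) = (\<Prod>i<CARD('n). t - lam i)"
    proof
    fix t
    show "det (t *\<^sub>R mat 1 - X) = (\<Prod>i<CARD('n). t - lam i)"
      using det_Xmat[OF v j, of t al ga be] prodlam[of t] S cS by (simp add: X_def N_def)
    qed
  qed
  have sumlam: "(\<Sum>i\<in>{N - k..<N}. lam i) = k * al + be * (v \<bullet> v)"
  proof -
    have N1: "N = Suc (N - 1)" using kN by simp
    have "(\<Sum>i\<in>{N - k..<N}. lam i) = (\<Sum>i\<in>{N - k..<N - 1}. lam i) + lam (N - 1)"
    proof -
      have "N - k \<le> N - 1" using kN by arith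
      hence "(\<Sum>i\<in>{N - k..<Suc (N - 1)}. lam i) = (\<Sum>i\<in>{N - k..<N - 1}. lam i) + lam (N - 1)"
        by (rule sum.atLeastLessThan_Suc)
      thus ?thesis using N1 by simp
    qed
    also have "(\<Sum>i\<in>{N - k..<N - 1}. lam i) = (k - 1) * al"
      using kN by (simp add: lam_def)
    finally show ?thesis unfolding lN using kN by (simp add: of_nat_diff algebra_simps)
  qed
  show ?thesis
    unfolding Pplus_def X_def[symmetric]
  proof (rule the_equality)
    show "\<exists>lam. sorted_eigs X lam \<and> k * al + be * (v \<bullet> v) = (\<Sum>i\<in>{CARD('n) - k..<CARD('n)}. lam i)"
      using eig sumlam by (auto simp: N_def)
    fix s assume "\<exists>lam. sorted_eigs X lam \<and> s = (\<Sum>i\<in>{CARD('n) - k..<CARD('n)}. lam i)"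
    then obtain lam' where l': "sorted_eigs X lam'" "s = (\<Sum>i\<in>{N - k..<N}. lam' i)" by (auto simp: N_def)
    have "\<forall>i<N. lam i = lam' i"
    proof (rule sorted_prod_unique')
      show "\<forall>i j. i \<le> j \<longrightarrow> j < N \<longrightarrow> lam i \<le> lam j" by (rule sorted)
      show "\<forall>i j. i \<le> j \<longrightarrow> j < N \<longrightarrow> lam' i \<le> lam' j" using l'(1) by (simp add: sorted_eigs_def N_def)
      show "\<forall>t. (\<Prod>i<N. t - lam i) = (\<Prod>i<N. t - lam' i)"
        using eig l'(1) by (simp add: sorted_eigs_def N_def)
    qed
    hence "(\<Sum>i\<in>{N - k..<N}. lam' i) = (\<Sum>i\<in>{N - k..<N}. lam i)" by (intro sum.cong) auto
    thus "s = k * al + be * (v \<bullet> v)" using l' sumlam by simp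
  qed
qed


lemma bounded_linear_PS: "bounded_linear (PS S)"
proof -
  have "linear (PS S)" by (rule linearI) (simp_all add: PS_add PS_scale)
  thus ?thesis by (simp add: linear_conv_bounded_linear)
qed

lemma has_derivative_PS[derivative_intros]:
  "(f has_derivative f') F \<Longrightarrow> ((\<lambda>x. PS S (f x)) has_derivative (\<lambda>h. PS S (f' h))) F"
  using bounded_linear.has_derivative[OF bounded_linear_PS] .

lemma continuous_on_PS[continuous_intros]:
  "continuous_on X f \<Longrightarrow> continuous_on X (\<lambda>x. PS S (f x))"
  using linear_continuous_on[OF bounded_linear_PS] continuous_on_compose2 by blast

lemma continuous_on_outer[continuous_intros]:
  "continuous_on X f \<Longrightarrow> continuous_on X g \<Longrightarrow> continuous_on X (\<lambda>x. outer (f x) (g x))"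
  unfolding outer_def by (intro continuous_intros)

lemma continuous_on_Xmat[continuous_intros]:
  "continuous_on X a \<Longrightarrow> continuous_on X b \<Longrightarrow> continuous_on X e \<Longrightarrow> continuous_on X f \<Longrightarrow>
   continuous_on X (\<lambda>x. Xmat S (a x) (b x) (e x) (f x))"
  unfolding Xmat_def by (intro continuous_intros)


lemma young_lite:
  fixes K w p :: real
  assumes "w \<ge> 0" "K \<ge> 0" "p > 0"
  shows "K * w \<le> w powr (1 + p) + K powr (1 + 1/p)"
proof (cases "K = 0")
  case True thus ?thesis using assms by simp
next
  case False
  hence Kp: "K > 0" using assms by simp
  show ?thesis
  proof (cases "w \<le> K powr (1/p)")
    case True
    have "K * w \<le> K * K powr (1/p)" using True Kp by simp
    also have "\<dots> = K powr (1 + 1/p)" using Kp by (simp add: powr_add)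
    moreover have "0 \<le> w powr (1 + p)" by simp
    ultimately show ?thesis by linarith
  next
    case False
    hence wp: "w > 0" using Kp by (smt (verit) powr_ge_zero)
    have "K = (K powr (1/p)) powr p" using Kp assms(3) by (simp add: powr_powr)
    also have "\<dots> < w powr p" using False assms(3) Kp by (intro powr_less_mono2) auto
    finally have "K * w < w powr p * w" using wp by simp
    also have "\<dots> = w powr (1 + p)" using wp by (simp add: powr_add)
    finally show ?thesis using Kp by (smt (verit) powr_ge_zero)
  qed
qed


lemma comparison:
  fixes u W :: "real \<Rightarrow> real^'n \<Rightarrow> real" and al :: "real \<Rightarrow> real"
  assumes sup: "visc_super k p u"
    and ucont: "continuous_on ({0..} \<times> UNIV) (\<lambda>(t,x). u t x)"
    and upos: "\<forall>t\<ge>0. \<forall>x. u t x \<ge> 0"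
    and T1: "T1 > 0"
    and Wcont: "continuous_on ({0..T1} \<times> UNIV) (\<lambda>(t,x). W t x)"
    and acont: "continuous_on {0..T1} al" and apos: "\<forall>t\<in>{0..T1}. al t > 0"
    and K: "compact K" "\<forall>t\<in>{0..T1}. \<forall>x. x \<notin> K \<longrightarrow> W t x \<le> 0"
    and init: "\<forall>x. W 0 x < u 0 x" and fin: "\<forall>x. W T1 x < u T1 x"
    and strict: "\<forall>b\<ge>0. \<forall>t0 x0. 0 < t0 \<and> t0 < T1 \<and> 0 \<le> W t0 x0 - b * al t0 \<longrightarrow>
       (\<exists>phit Dphi H. C12_test (\<lambda>t x. W t x - b * al t) phit Dphi H \<and>
          phit t0 x0 < Pplus k (H t0 x0) + (W t0 x0 - b * al t0) powr (1 + p))"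
  shows "\<forall>t\<in>{0..T1}. \<forall>x. W t x \<le> u t x"
proof (rule ccontr)
  assume "\<not> ?thesis"
  then obtain t' x' where t': "t' \<in> {0..T1}" and bad: "W t' x' > u t' x'" by (meson not_le)
  have x'K: "x' \<in> K"
  proof (rule ccontr)
    assume "x' \<notin> K"
    hence "W t' x' \<le> 0" using K(2) t' by blast
    moreover have "u t' x' \<ge> 0" using upos t' by auto
    ultimately show False using bad by simp
  qed
  define m where "m = (\<lambda>(t,x). (W t x - u t x) / al t)"
  have cm: "continuous_on ({0..T1} \<times> K) m"
  proof -
    have c1: "continuous_on ({0..T1} \<times> K) (\<lambda>(t,x). W t x)"
      by (rule continuous_on_subset[OF Wcont]) auto
    have c2: "continuous_on ({0..T1} \<times> K) (\<lambda>(t,x). u t x)"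
      by (rule continuous_on_subset[OF ucont]) auto
    have c3: "continuous_on ({0..T1} \<times> K) (\<lambda>z. al (fst z))"
      by (rule continuous_on_compose2[OF acont continuous_on_fst]) auto
    have "continuous_on ({0..T1} \<times> K) (\<lambda>z. ((\<lambda>(t,x). W t x) z - (\<lambda>(t,x). u t x) z) / al (fst z))"
      using apos by (intro continuous_intros c1 c2 c3) auto
    thus ?thesis by (simp add: m_def case_prod_beta')
  qed
  have cpt: "compact ({0..T1} \<times> K)" using K(1) by (intro compact_Times) auto
  obtain z where z: "z \<in> {0..T1} \<times> K" and zmax: "\<forall>y\<in>{0..T1} \<times> K. m y \<le> m z"
    using continuous_attains_sup[OF cpt _ cm] t' x'K by blast
  obtain ts xs where zeq: "z = (ts, xs)" by (cases z)
  define b where "b = m z"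
  have apos': "al t' > 0" using apos t' by auto
  have "m (t', x') > 0" using bad apos' by (simp add: m_def)
  hence bpos: "b > 0" using zmax t' x'K unfolding b_def by force
  have ts: "ts \<in> {0..T1}" and xs: "xs \<in> K" using z zeq by auto
  have als: "al ts > 0" using apos ts by auto
  have below: "W t x - b * al t \<le> u t x" if "t \<in> {0..T1}" for t x
  proof (cases "x \<in> K")
    case True
    hence "m (t,x) \<le> b" using zmax that unfolding b_def by blast
    moreover have "al t > 0" using apos that by auto
    ultimately show ?thesis by (simp add: m_def pos_divide_le_eq)
  next
    case False
    hence "W t x \<le> 0" using K(2) that by blast
    moreover have "al t > 0" using apos that by auto
    moreover have "u t x \<ge> 0" using upos that by auto
    ultimately show ?thesis using bpos by (smt (verit) mult_pos_pos)
  qed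
  have eq: "W ts xs - b * al ts = u ts xs"
    using als by (simp add: b_def zeq m_def)
  have ts0: "ts \<noteq> 0"
  proof
    assume "ts = 0"
    hence "W ts xs < u ts xs" using init by simp
    thus False using eq bpos als by (smt (verit) mult_pos_pos)
  qed
  have ts1: "ts \<noteq> T1"
  proof
    assume "ts = T1"
    hence "W ts xs < u ts xs" using fin by simp
    thus False using eq bpos als by (smt (verit) mult_pos_pos)
  qed
  have tsi: "0 < ts" "ts < T1" using ts ts0 ts1 by auto
  have nonneg: "0 \<le> W ts xs - b * al ts" using eq upos tsi by auto
  obtain phit Dphi H where C: "C12_test (\<lambda>t x. W t x - b * al t) phit Dphi H"
     and lt: "phit ts xs < Pplus k (H ts xs) + (W ts xs - b * al ts) powr (1 + p)"
  proof -
    have "b \<ge> 0" using bpos by simp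
    from strict[rule_format, OF this, of ts xs] tsi nonneg
    show ?thesis using that by blast
  qed
  define e where "e = min ts (T1 - ts)"
  have epos: "e > 0" using tsi by (simp add: e_def)
  have locmin: "\<forall>t x. dist (t, x) (ts, xs) < e \<longrightarrow>
      u t x - (W t x - b * al t) \<ge> u ts xs - (W ts xs - b * al ts)"
  proof (intro allI impI)
    fix t x assume "dist (t, x) (ts, xs) < e"
    hence "dist t ts < e" using dist_fst_le[of "(t,x)" "(ts,xs)"] by simp
    hence "t \<in> {0..T1}" by (auto simp: e_def dist_real_def)
    thus "u t x - (W t x - b * al t) \<ge> u ts xs - (W ts xs - b * al ts)"
      using below eq by simp
  qed
  have "phit ts xs \<ge> Pplus k (H ts xs) + u ts xs powr (1 + p)"
    using sup[unfolded visc_super_def, rule_format, of "\<lambda>t x. W t x - b * al t" phit Dphi H ts xs]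
      C tsi epos locmin by blast
  thus False using lt eq by simp
qed


context
  fixes S :: "'n::finite set" and c :: "real^'n" and t0 A T ep q C1 g :: real
begin

definition vS :: "real^'n \<Rightarrow> real^'n" where "vS x = PS S (x - c)"
definition vN :: "real^'n \<Rightarrow> real^'n" where "vN x = PS (-S) (x - c)"
definition rho where "rho x = vS x \<bullet> vS x"
definition tau where "tau x = vN x \<bullet> vN x"
definition zeta :: "real \<Rightarrow> real" where "zeta t = (T - t)^2 + ep^2"
definition aa where "aa t = A * zeta t powr (-q/2)"
definition aa' where "aa' t = A * q * (T - t) * zeta t powr (-q/2 - 1)"
definition EE where "EE t x = (t0 + t) powr (- real (card S)/2) * exp (- rho x / (4*(t0+t)))"
definition VV where "VV b t x = EE t x - b - C1 * t - g * tau x"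
definition WW where "WW b t x = aa t * VV b t x"
definition Et where "Et t x = EE t x * (- real (card S)/(2*(t0+t)) + rho x/(4*(t0+t)^2))"
definition Wt where "Wt b t x = aa' t * VV b t x + aa t * (Et t x - C1)"
definition DW where "DW t x = aa t *\<^sub>R ((- EE t x/(2*(t0+t))) *\<^sub>R vS x - (2*g) *\<^sub>R vN x)"
definition HW where "HW t x = Xmat S (- aa t * EE t x/(2*(t0+t))) (-2*g*aa t) (aa t * EE t x/(4*(t0+t)^2)) (vS x)"

lemma rho_deriv: "(rho has_derivative (\<lambda>h. (2 *\<^sub>R vS x) \<bullet> h)) (at x)"
proof -
  have "((\<lambda>x. PS S (x - c) \<bullet> PS S (x - c)) has_derivative
     (\<lambda>h. PS S (x - c) \<bullet> PS S (h - 0) + PS S (h - 0) \<bullet> PS S (x - c))) (at x)"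
    by (intro derivative_intros)
  moreover have "PS S (x - c) \<bullet> PS S h + PS S h \<bullet> PS S (x - c) = (2 *\<^sub>R vS x) \<bullet> h" for h
    by (simp add: vS_def PS_inner PS_PS inner_commute)
  ultimately show ?thesis unfolding rho_def[abs_def] vS_def by simp
qed

lemma tau_deriv: "(tau has_derivative (\<lambda>h. (2 *\<^sub>R vN x) \<bullet> h)) (at x)"
proof -
  have "((\<lambda>x. PS (-S) (x - c) \<bullet> PS (-S) (x - c)) has_derivative
     (\<lambda>h. PS (-S) (x - c) \<bullet> PS (-S) (h - 0) + PS (-S) (h - 0) \<bullet> PS (-S) (x - c))) (at x)"
    by (intro derivative_intros)
  moreover have "PS (-S) (x - c) \<bullet> PS (-S) h + PS (-S) h \<bullet> PS (-S) (x - c) = (2 *\<^sub>R vN x) \<bullet> h" for h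
    by (simp add: vN_def PS_inner PS_PS inner_commute)
  ultimately show ?thesis unfolding tau_def[abs_def] vN_def by simp
qed

lemma EE_dx: assumes "t0 + t > 0"
  shows "(EE t has_derivative (\<lambda>h. (- EE t x/(2*(t0+t))) * (vS x \<bullet> h))) (at x)"
proof -
  define K where "K = (t0 + t) powr (- real (card S)/2)"
  define M where "M = - 1 / (4*(t0+t))"
  have eq: "EE t = (\<lambda>x. K * exp (M * rho x))"
    by (simp add: EE_def fun_eq_iff K_def M_def)
  have d: "((\<lambda>x. K * exp (M * rho x)) has_derivative (\<lambda>h. K * (exp (M * rho x) * (M * ((2 *\<^sub>R vS x) \<bullet> h))))) (at x)"
    by (auto intro!: derivative_eq_intros rho_deriv)
  have "K * (exp (M * rho x) * (M * ((2 *\<^sub>R vS x) \<bullet> h))) = (- EE t x/(2*(t0+t))) * (vS x \<bullet> h)" for h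
    using assms by (simp add: EE_def K_def M_def field_simps)
  thus ?thesis using d unfolding eq by simp
qed

lemma WW_dx: assumes "t0 + t > 0"
  shows "(WW b t has_derivative (\<lambda>h. DW t x \<bullet> h)) (at x)"
proof -
  have "((\<lambda>x. aa t * (EE t x - b - C1 * t - g * tau x)) has_derivative
     (\<lambda>h. aa t * ((- EE t x/(2*(t0+t))) * (vS x \<bullet> h) - g * ((2 *\<^sub>R vN x) \<bullet> h)))) (at x)"
    by (auto intro!: derivative_eq_intros EE_dx[OF assms] tau_deriv)
  moreover have "aa t * ((- EE t x/(2*(t0+t))) * (vS x \<bullet> h) - g * ((2 *\<^sub>R vN x) \<bullet> h)) = DW t x \<bullet> h" for h
    by (simp add: DW_def inner_diff_left algebra_simps)
  ultimately show ?thesis unfolding WW_def[abs_def] VV_def by simp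
qed

lemma vS_deriv: "(vS has_derivative PS S) (at x)"
proof -
  have "((\<lambda>x. PS S (x - c)) has_derivative (\<lambda>h. PS S (h - 0))) (at x)"
    by (intro derivative_intros)
  thus ?thesis unfolding vS_def[abs_def] by simp
qed

lemma vN_deriv: "(vN has_derivative PS (-S)) (at x)"
proof -
  have "((\<lambda>x. PS (-S) (x - c)) has_derivative (\<lambda>h. PS (-S) (h - 0))) (at x)"
    by (intro derivative_intros)
  thus ?thesis unfolding vN_def[abs_def] by simp
qed

lemma DW_dx: assumes "t0 + t > 0"
  shows "(DW t has_derivative (\<lambda>h. HW t x *v h)) (at x)"
proof -
  have "((\<lambda>x. aa t *\<^sub>R ((- EE t x/(2*(t0+t))) *\<^sub>R vS x - (2*g) *\<^sub>R vN x)) has_derivative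
     (\<lambda>h. aa t *\<^sub>R (((- ((- EE t x/(2*(t0+t))) * (vS x \<bullet> h))/(2*(t0+t))) *\<^sub>R vS x + (- EE t x/(2*(t0+t))) *\<^sub>R PS S h)
        - (2*g) *\<^sub>R PS (-S) h))) (at x)"
    using assms by (auto intro!: derivative_eq_intros EE_dx[OF assms] vS_deriv vN_deriv)
  moreover have "aa t *\<^sub>R (((- ((- EE t x/(2*(t0+t))) * (vS x \<bullet> h))/(2*(t0+t))) *\<^sub>R vS x + (- EE t x/(2*(t0+t))) *\<^sub>R PS S h)
        - (2*g) *\<^sub>R PS (-S) h) = HW t x *v h" for h
  proof -
    have "2 * t0 + 2 * t \<noteq> 0" "t0 + t \<noteq> 0" using assms by auto
    thus ?thesis by (simp add: HW_def Xmat_mult algebra_simps power2_eq_square divide_simps)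
  qed
  ultimately show ?thesis unfolding DW_def[abs_def] by simp
qed

lemma zeta_pos: "ep > 0 \<Longrightarrow> zeta s > 0"
  unfolding zeta_def by (simp add: add_nonneg_pos)

lemma aa_dt: assumes "ep > 0" shows "(aa has_real_derivative aa' t) (at t)"
proof -
  have z: "(T - t)^2 + ep^2 > 0" using zeta_pos[OF assms] by (simp add: zeta_def)
  have "((\<lambda>s. A * ((T - s)^2 + ep^2) powr (-q/2)) has_real_derivative
      A * ((-q/2) * ((T - t)^2 + ep^2) powr (-q/2 - 1) * (2 * (T - t) * (0 - 1) + 0))) (at t)"
    using z by (auto intro!: derivative_eq_intros)
  moreover have "A * ((-q/2) * ((T - t)^2 + ep^2) powr (-q/2 - 1) * (2 * (T - t) * (0 - 1) + 0)) = aa' t"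
    by (simp add: aa'_def zeta_def field_simps)
  ultimately show ?thesis unfolding aa_def[abs_def] zeta_def by simp
qed

lemma EE_dt: assumes "t0 + t > 0" shows "((\<lambda>s. EE s x) has_real_derivative Et t x) (at t)"
proof -
  define r where "r = - real (card S)/2"
  have d1: "((\<lambda>s. (t0 + s) powr r) has_real_derivative r * (t0 + t) powr (r - 1)) (at t)"
    using assms by (auto intro!: derivative_eq_intros)
  have d2: "((\<lambda>s. exp (- rho x / (4*(t0+s)))) has_real_derivative exp (- rho x / (4*(t0+t))) * (rho x / (4*(t0+t)^2))) (at t)"
  proof -
    have nz: "t0 + t \<noteq> 0" using assms by simp
    show ?thesis using assms
      by (auto intro!: derivative_eq_intros simp: nz power2_eq_square divide_simps) (simp add: algebra_simps)
  qed
  have "((\<lambda>s. (t0 + s) powr r * exp (- rho x / (4*(t0+s)))) has_real_derivative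
     r * (t0 + t) powr (r - 1) * exp (- rho x / (4*(t0+t))) + (t0 + t) powr r * (exp (- rho x / (4*(t0+t))) * (rho x / (4*(t0+t)^2)))) (at t)"
    using DERIV_mult[OF d1 d2] by (simp add: algebra_simps)
  moreover have "r * (t0 + t) powr (r - 1) * exp (- rho x / (4*(t0+t))) + (t0 + t) powr r * (exp (- rho x / (4*(t0+t))) * (rho x / (4*(t0+t)^2))) = Et t x"
  proof -
    have p1: "(t0 + t) powr (r - 1) = (t0 + t) powr r / (t0 + t)"
      using assms by (simp add: powr_diff)
    have nz: "t0 + t \<noteq> 0" using assms by simp
    have ck: "- real (card S)/(2*(t0+t)) = r/(t0+t)" by (simp add: r_def)
    show ?thesis unfolding p1 Et_def EE_def r_def[symmetric] ck
      by (simp add: algebra_simps)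
  qed
  ultimately show ?thesis unfolding EE_def r_def by simp
qed

lemma WW_dt: assumes "t0 + t > 0" "ep > 0" shows "((\<lambda>s. WW b s x) has_real_derivative Wt b t x) (at t)"
proof -
  have "((\<lambda>s. aa s * (EE s x - b - C1 * s - g * tau x)) has_real_derivative
      aa' t * (EE t x - b - C1 * t - g * tau x) + aa t * (Et t x - 0 - C1 * 1 - 0)) (at t)"
    by (auto intro!: derivative_eq_intros aa_dt[OF assms(2)] EE_dt[OF assms(1)])
  thus ?thesis by (simp add: WW_def VV_def Wt_def)
qed

lemma cont_rho[continuous_intros]: "continuous_on X f \<Longrightarrow> continuous_on X (\<lambda>z. rho (f z))"
  unfolding rho_def vS_def by (intro continuous_intros)
lemma cont_tau[continuous_intros]: "continuous_on X f \<Longrightarrow> continuous_on X (\<lambda>z. tau (f z))"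
  unfolding tau_def vN_def by (intro continuous_intros)
lemma cont_vS[continuous_intros]: "continuous_on X f \<Longrightarrow> continuous_on X (\<lambda>z. vS (f z))"
  unfolding vS_def by (intro continuous_intros)
lemma cont_vN[continuous_intros]: "continuous_on X f \<Longrightarrow> continuous_on X (\<lambda>z. vN (f z))"
  unfolding vN_def by (intro continuous_intros)

lemma cont_aa[continuous_intros]: assumes "ep > 0" "continuous_on X f" shows "continuous_on X (\<lambda>z. aa (f z))"
  unfolding aa_def using zeta_pos[OF assms(1)] unfolding zeta_def
  by (intro continuous_intros assms(2)) (use assms(1) in auto)

lemma cont_aa'[continuous_intros]: assumes "ep > 0" "continuous_on X f" shows "continuous_on X (\<lambda>z. aa' (f z))"
  unfolding aa'_def using zeta_pos[OF assms(1)] unfolding zeta_def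
  by (intro continuous_intros assms(2)) (use assms(1) in auto)

lemma cont_EE[continuous_intros]: assumes "continuous_on X f" "continuous_on X h" "\<forall>z\<in>X. t0 + f z > 0"
  shows "continuous_on X (\<lambda>z. EE (f z) (h z))"
  unfolding EE_def using assms(3) by (intro continuous_intros assms(1,2)) auto

lemma cont_Et[continuous_intros]: assumes "continuous_on X f" "continuous_on X h" "\<forall>z\<in>X. t0 + f z > 0"
  shows "continuous_on X (\<lambda>z. Et (f z) (h z))"
  unfolding Et_def using assms(3) by (intro continuous_intros assms(1,2)) auto

definition "Dpos = {t. t0 + t > 0} \<times> (UNIV :: (real^'n) set)"

lemma cont_Wt: "ep > 0 \<Longrightarrow> continuous_on Dpos (\<lambda>(t,x). Wt b t x)"
  unfolding case_prod_beta' Wt_def VV_def Dpos_def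
  by (intro continuous_intros) auto

lemma cont_WW: "ep > 0 \<Longrightarrow> continuous_on Dpos (\<lambda>(t,x). WW b t x)"
  unfolding case_prod_beta' WW_def VV_def Dpos_def
  by (intro continuous_intros) auto

lemma cont_DW: "ep > 0 \<Longrightarrow> continuous_on Dpos (\<lambda>(t,x). DW t x)"
  unfolding case_prod_beta' DW_def Dpos_def
  by (intro continuous_intros) auto

lemma cont_HW: "ep > 0 \<Longrightarrow> continuous_on Dpos (\<lambda>(t,x). HW t x)"
  unfolding case_prod_beta' HW_def Dpos_def
  by (intro continuous_intros) auto

lemma WW_C12: assumes "t0 \<ge> 0" "ep > 0" shows "C12_test (WW b) (Wt b) DW HW"
proof -
  have sub: "{0<..} \<times> UNIV \<subseteq> Dpos" using assms(1) by (auto simp: Dpos_def)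
  show ?thesis unfolding C12_test_def
    using WW_dt[OF _ assms(2)] WW_dx DW_dx assms(1)
      continuous_on_subset[OF cont_Wt[OF assms(2)] sub]
      continuous_on_subset[OF cont_DW[OF assms(2)] sub]
      continuous_on_subset[OF cont_HW[OF assms(2)] sub]
    by auto
qed

lemma aa_pos: "A > 0 \<Longrightarrow> ep > 0 \<Longrightarrow> aa t > 0"
  unfolding aa_def using zeta_pos[of t] by simp

lemma EE_nonneg: "EE t x \<ge> 0" by (simp add: EE_def)

lemma EE_le: assumes "t0 > 0" "t \<ge> 0" shows "EE t x \<le> t0 powr (- real (card S)/2)"
proof -
  have "rho x \<ge> 0" by (simp add: rho_def)
  hence "exp (- rho x / (4*(t0+t))) \<le> 1" using assms by simp
  hence "EE t x \<le> (t0 + t) powr (- real (card S)/2)"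
    unfolding EE_def by (simp add: mult_left_le)
  also have "\<dots> \<le> t0 powr (- real (card S)/2)"
    using assms by (intro powr_mono2') auto
  finally show ?thesis .
qed

lemma Pplus_HW:
  assumes "card S = k" "1 \<le> k" "k < CARD('n)" "t0 > 0" "t \<ge> 0" "ep > 0" "A > 0"
    "g \<ge> t0 powr (- real (card S)/2) / (4*t0)"
  shows "Pplus k (HW t x) = aa t * Et t x"
proof -
  have ap: "aa t > 0" using aa_pos assms by simp
  have sp: "t0 + t > 0" "t0 + t \<ge> t0" using assms by auto
  have E0: "EE t x \<ge> 0" by (rule EE_nonneg)
  have "EE t x / (4*(t0+t)) \<le> t0 powr (- real (card S)/2) / (4*(t0+t))"
    using EE_le[OF assms(4,5)] sp by (intro divide_right_mono) auto
  also have "\<dots> \<le> t0 powr (- real (card S)/2) / (4*t0)"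
    using sp assms(4) by (intro divide_left_mono) auto
  finally have Eg: "EE t x / (4*(t0+t)) \<le> g" using assms(8) by simp
  have ord: "-2*g*aa t \<le> - aa t * EE t x/(2*(t0+t))"
  proof -
    have "EE t x/(2*(t0+t)) \<le> 2 * g" using Eg sp by (simp add: field_simps)
    hence "aa t * (EE t x/(2*(t0+t))) \<le> aa t * (2 * g)" using ap by (intro mult_left_mono) auto
    thus ?thesis by (simp add: algebra_simps)
  qed
  have be: "0 \<le> aa t * EE t x/(4*(t0+t)^2)" using ap E0 by simp
  have v: "PS S (vS x) = vS x" by (simp add: vS_def PS_PS)
  have "Pplus k (HW t x) = k * (- aa t * EE t x/(2*(t0+t))) + aa t * EE t x/(4*(t0+t)^2) * (vS x \<bullet> vS x)"
    unfolding HW_def by (rule Pplus_Xmat[OF assms(1-3) v ord be])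
  also have "\<dots> = aa t * Et t x"
    using assms(1) by (simp add: Et_def rho_def algebra_simps)
  finally show ?thesis .
qed

lemma kappa_bound:
  assumes "ep > 0" "q > 0" "A > 0"
  shows "\<bar>aa' t / aa t\<bar> powr q \<le> q powr q / A * aa t"
proof -
  have zp: "zeta t > 0" using zeta_pos assms by simp
  have ap: "aa t > 0" using aa_pos assms by simp
  have pz: "zeta t powr (-q/2 - 1) = zeta t powr (-q/2) / zeta t"
    using zp by (simp add: powr_diff)
  have pz2: "zeta t powr (-q/2) > 0" using zp by simp
  have k: "aa' t / aa t = q * (T - t) / zeta t"
    unfolding aa'_def aa_def pz using zp pz2 assms by (simp add: field_simps)
  have "\<bar>T - t\<bar> \<le> sqrt (zeta t)"
    unfolding zeta_def by (rule real_le_rsqrt) (simp add: power2_abs)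
  hence "\<bar>aa' t / aa t\<bar> \<le> q * sqrt (zeta t) / zeta t"
    unfolding k using zp assms by (simp add: abs_mult divide_right_mono mult_left_mono)
  also have "\<dots> = q * zeta t powr (-1/2)"
  proof -
    have "zeta t powr (1/2 - 1) = zeta t powr (1/2) / zeta t powr 1" by (rule powr_diff)
    hence "zeta t powr (-1/2) = sqrt (zeta t) / zeta t"
      using zp by (simp add: powr_half_sqrt)
    thus ?thesis by simp
  qed
  finally have kb: "\<bar>aa' t / aa t\<bar> \<le> q * zeta t powr (-1/2)" .
  have "\<bar>aa' t / aa t\<bar> powr q \<le> (q * zeta t powr (-1/2)) powr q"
    using kb assms by (intro powr_mono2) auto
  also have "\<dots> = q powr q * zeta t powr (-q/2)"
    using zp assms by (simp add: powr_mult powr_powr)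
  also have "\<dots> = q powr q / A * aa t"
    using assms by (simp add: aa_def)
  finally show ?thesis .
qed

lemma WW_strict:
  assumes "card S = k" "1 \<le> k" "k < CARD('n)" "t0 > 0" "t \<ge> 0" "ep > 0" "A > 0"
    "g \<ge> t0 powr (- real (card S)/2) / (4*t0)" "p > 0" "q = 1 + 1/p" "A * C1 > q powr q"
    "WW b t x \<ge> 0"
  shows "Wt b t x < Pplus k (HW t x) + WW b t x powr (1 + p)"
proof -
  have P: "Pplus k (HW t x) = aa t * Et t x" by (rule Pplus_HW[OF assms(1-8)])
  have ap: "aa t > 0" using aa_pos assms by simp
  define kap where "kap = aa' t / aa t"
  have qp: "q > 0" using assms(9,10) by (simp add: add_pos_pos)
  have e1: "Wt b t x - Pplus k (HW t x) = kap * WW b t x - aa t * C1"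
    unfolding P Wt_def WW_def kap_def using ap by (simp add: field_simps)
  have "kap * WW b t x \<le> \<bar>kap\<bar> * WW b t x" using assms(12) by (intro mult_right_mono) auto
  also have "\<dots> \<le> WW b t x powr (1 + p) + \<bar>kap\<bar> powr (1 + 1/p)"
    by (rule young_lite) (use assms in auto)
  also have "\<bar>kap\<bar> powr (1 + 1/p) \<le> q powr q / A * aa t"
    unfolding kap_def using kappa_bound[OF assms(6) qp assms(7)] assms(10) by simp
  also have "q powr q / A * aa t < C1 * aa t"
  proof -
    have "q powr q / A < C1" using assms(7,11) by (simp add: field_simps)
    hence "q powr q / A * aa t < C1 * aa t" using ap by (rule mult_strict_right_mono)
    thus ?thesis .
  qed
  finally show ?thesis using e1 by (simp add: algebra_simps)
qed

lemma WW_shift: "WW b t x - be * aa t = WW (b + be) t x"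
  by (simp add: WW_def VV_def algebra_simps)

lemma barrier_comparison:
  fixes u :: "real \<Rightarrow> real^'n \<Rightarrow> real"
  assumes sup: "visc_super k p u"
    and ucont: "continuous_on ({0..} \<times> UNIV) (\<lambda>(t,x). u t x)"
    and upos: "\<forall>t\<ge>0. \<forall>x. u t x \<ge> 0"
    and prm: "card S = k" "1 \<le> k" "k < CARD('n)" "t0 > 0" "ep > 0" "A > 0"
    "g \<ge> t0 powr (- real (card S)/2) / (4*t0)" "p > 0" "q = 1 + 1/p" "A * C1 > q powr q"
    and T1: "T1 > 0"
    and K: "compact K" "\<forall>t\<in>{0..T1}. \<forall>x. x \<notin> K \<longrightarrow> WW b0 t x \<le> 0"
    and init: "\<forall>x. WW b0 0 x < u 0 x" and fin: "\<forall>x. WW b0 T1 x < u T1 x"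
  shows "\<forall>t\<in>{0..T1}. \<forall>x. WW b0 t x \<le> u t x"
proof (rule comparison[OF sup ucont upos T1 _ _ _ K init fin])
  have sub: "{0..T1} \<times> UNIV \<subseteq> Dpos" using prm(4) by (auto simp: Dpos_def)
  show "continuous_on ({0..T1} \<times> UNIV) (\<lambda>(t,x). WW b0 t x)"
    using continuous_on_subset[OF cont_WW[OF prm(5)] sub] .
  show "continuous_on {0..T1} aa"
    using cont_aa[OF prm(5) continuous_on_id] by simp
  show "\<forall>t\<in>{0..T1}. aa t > 0" using aa_pos prm by simp
  show "\<forall>b\<ge>0. \<forall>t0a x0. 0 < t0a \<and> t0a < T1 \<and> 0 \<le> WW b0 t0a x0 - b * aa t0a \<longrightarrow>
       (\<exists>phit Dphi H. C12_test (\<lambda>t x. WW b0 t x - b * aa t) phit Dphi H \<and>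
          phit t0a x0 < Pplus k (H t0a x0) + (WW b0 t0a x0 - b * aa t0a) powr (1 + p))"
  proof (intro allI impI)
    fix b t0a x0
    assume h: "0 \<le> b" "0 < t0a \<and> t0a < T1 \<and> 0 \<le> WW b0 t0a x0 - b * aa t0a"
    have feq: "(\<lambda>t x. WW b0 t x - b * aa t) = WW (b0 + b)" by (simp add: WW_shift fun_eq_iff)
    have C: "C12_test (WW (b0 + b)) (Wt (b0 + b)) DW HW" using WW_C12 prm by simp
    have nn: "WW (b0 + b) t0a x0 \<ge> 0" using h WW_shift by simp
    have "Wt (b0 + b) t0a x0 < Pplus k (HW t0a x0) + WW (b0 + b) t0a x0 powr (1 + p)"
      by (rule WW_strict[OF prm(1-4) _ prm(5-10) nn]) (use h in simp)
    thus "\<exists>phit Dphi H. C12_test (\<lambda>t x. WW b0 t x - b * aa t) phit Dphi H \<and>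
          phit t0a x0 < Pplus k (H t0a x0) + (WW b0 t0a x0 - b * aa t0a) powr (1 + p)"
      unfolding feq WW_shift using C by blast
  qed
qed

lemma rho_tau: "rho x + tau x = (dist x c)^2"
proof -
  have "rho x + tau x = (\<Sum>i\<in>UNIV. (x - c)$i * (x - c)$i)"
    unfolding rho_def tau_def vS_def vN_def inner_vec_def PS_def
    by (simp add: sum.distrib[symmetric]) (rule sum.cong, auto)
  also have "\<dots> = (x - c) \<bullet> (x - c)" by (simp add: inner_vec_def)
  also have "\<dots> = (dist x c)^2" by (simp add: dist_norm dot_square_norm)
  finally show ?thesis .
qed

lemma rho_nonneg: "rho x \<ge> 0" by (simp add: rho_def)
lemma tau_nonneg: "tau x \<ge> 0" by (simp add: tau_def)
lemma rho_c: "rho c = 0" by (simp add: rho_def vS_def PS_def vec_eq_iff)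
lemma tau_c: "tau c = 0" by (simp add: tau_def vN_def PS_def vec_eq_iff)

lemma EE_le2: assumes "t0 > 0" "t \<ge> 0"
  shows "EE t x \<le> t0 powr (- real (card S)/2) * exp (- rho x / (4*(t0+t)))"
proof -
  have "(t0 + t) powr (- real (card S)/2) \<le> t0 powr (- real (card S)/2)"
    using assms by (intro powr_mono2') auto
  thus ?thesis unfolding EE_def by (intro mult_right_mono) auto
qed

lemma exp_neg_le: fixes z :: real assumes "z > 0" shows "exp (- z) \<le> 1 / z"
proof -
  have "1 + z \<le> exp z" by (rule exp_ge_add_one_self)
  hence "z \<le> exp z" by linarith
  thus ?thesis using assms by (simp add: exp_minus field_simps)
qed

lemma contra:
  fixes u :: "real \<Rightarrow> real^'n \<Rightarrow> real" and u0 :: "real^'n \<Rightarrow> real"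
  assumes gs: "global_solution k p u0 u"
  and prm: "card S = k" "1 \<le> k" "k < CARD('n)" "p > 0" "q = 1 + 1/p"
  and dr: "de > 0" "r > 0" "\<forall>x. dist x c < r \<longrightarrow> u0 x > de"
  and t0: "t0 > 0" and ep: "ep > 0" and T: "T \<ge> 0"
  and Adef: "A = de * t0 powr (real k/2) * (T^2 + ep^2) powr (q/2)"
  and AC: "A * C1 > q powr q" and C1: "C1 > 0"
  and g1: "g \<ge> t0 powr (- real k/2) / (4*t0)" and g2: "g * r^2 > 2 * t0 powr (- real k/2)"
  and b0: "b0 > 0" "t0 powr (- real k/2) * exp (- (r^2)/(8*t0)) < b0"
  and big: "A * (ep^2) powr (-q/2) * ((t0 + T) powr (- real k/2) - b0 - C1 * T) > u T c"
  shows False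
proof -
  have ucont: "continuous_on ({0..} \<times> UNIV) (\<lambda>(t,x). u t x)"
    and upos: "\<forall>t\<ge>0. \<forall>x. u t x \<ge> 0" and u0eq: "\<forall>x. u 0 x = u0 x"
    and sup: "visc_super k p u"
    using gs by (auto simp: global_solution_def)
  define kr where "kr = real k"
  have cS: "real (card S) = kr" using prm(1) by (simp add: kr_def)
  define P0 where "P0 = t0 powr (- kr/2)"
  have P0p: "P0 > 0" using t0 by (simp add: P0_def)
  have Ap: "A > 0" using Adef dr t0 ep by simp
  have gp: "g > 0"
  proof -
    have "2 * t0 powr (- real k/2) > 0" using t0 by simp
    hence "g * r^2 > 0" using g2 by linarith
    thus ?thesis using dr(2) by (simp add: zero_less_mult_iff)
  qed
  have aap: "aa t > 0" for t using aa_pos Ap ep by simp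
  have EEP0: "EE t x \<le> P0 * exp (- rho x / (4*(t0+t)))" if "t \<ge> 0" for t x
    using EE_le2[OF t0 that] cS by (simp add: P0_def)
  have EEP0': "EE t x \<le> P0" if "t \<ge> 0" for t x
  proof -
    have "exp (- rho x / (4*(t0+t))) \<le> 1" using rho_nonneg[of x] t0 that by simp
    hence "P0 * exp (- rho x / (4*(t0+t))) \<le> P0 * 1" using P0p by (intro mult_left_mono) auto
    thus ?thesis using EEP0[OF that, of x] by linarith
  qed
  have Vb: "VV b0 t x \<le> EE t x - b0 - g * tau x" if "t \<ge> 0" for t x
    using C1 that unfolding VV_def by (simp add: mult_nonneg_nonneg)
  define T1 where "T1 = T + (t0 + T) powr (- kr/2) / C1 + 1"
  have T1p: "T1 > 0" "T \<le> T1" using T C1 t0 by (auto simp: T1_def add_nonneg_pos)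
  define X where "X = 8*(t0+T1)*P0/b0 + 2*P0/g"
  have Xp: "X \<ge> 0" using t0 T1p P0p b0 gp by (simp add: X_def)
  define R where "R = sqrt X + 1"
  have RX: "R^2 \<ge> X"
  proof -
    have "sqrt X \<le> R" by (simp add: R_def)
    hence "(sqrt X)^2 \<le> R^2" using Xp by (intro power_mono) auto
    thus ?thesis using Xp by simp
  qed
  have Kprop: "\<forall>t\<in>{0..T1}. \<forall>x. x \<notin> cball c R \<longrightarrow> WW b0 t x \<le> 0"
  proof (intro ballI allI impI)
    fix t x assume t: "t \<in> {0..T1}" and x: "x \<notin> cball c R"
    have "dist x c > R" using x by (simp add: dist_commute)
    moreover have "R \<ge> 0" using Xp by (simp add: R_def)
    ultimately have "(dist x c)^2 > R^2" by (intro power_strict_mono) auto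
    hence rt: "rho x + tau x > X" using RX rho_tau[of x] by simp
    have "VV b0 t x \<le> 0"
    proof (cases "rho x \<ge> 4*(t0+T1)*P0/b0")
      case True
      define z where "z = rho x / (4*(t0+T1))"
      have "4*(t0+T1)*P0/b0 > 0" using t0 T1p P0p b0 by simp
      hence rp: "rho x > 0" using True by linarith
      have zp: "z > 0" using rp t0 T1p by (simp add: z_def)
      have "rho x / (4*(t0+T1)) \<le> rho x / (4*(t0+t))"
        using t rp t0 by (intro divide_left_mono) auto
      hence "exp (- rho x / (4*(t0+t))) \<le> exp (- z)" by (simp add: z_def)
      also have "\<dots> \<le> 1 / z" by (rule exp_neg_le[OF zp])
      also have "\<dots> \<le> b0 / P0"
        using True rp t0 T1p P0p b0 by (simp add: z_def field_simps)
      finally have ex: "exp (- rho x / (4*(t0+t))) \<le> b0 / P0" .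
      have "EE t x \<le> P0 * exp (- rho x / (4*(t0+t)))" using EEP0[of t x] t by simp
      also have "\<dots> \<le> P0 * (b0 / P0)" using ex P0p by (intro mult_left_mono) auto
      finally have "EE t x \<le> P0 * (b0 / P0)" .
      hence "EE t x \<le> b0" using P0p by simp
      moreover have "g * tau x \<ge> 0" using gp tau_nonneg[of x] by simp
      ultimately show ?thesis using Vb[of t x] t by simp
    next
      case False
      define Y where "Y = 4*(t0+T1)*P0/b0"
      have Y0: "Y \<ge> 0" using t0 T1p P0p b0 by (simp add: Y_def)
      have XY: "X = 2 * Y + 2 * (P0 / g)" by (simp add: X_def Y_def)
      have "P0 / g \<ge> 0" using P0p gp by simp
      hence "tau x \<ge> P0 / g" using rt False Y0 unfolding XY Y_def[symmetric] by linarith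
      hence "g * tau x \<ge> P0" using gp by (simp add: field_simps)
      thus ?thesis using Vb[of t x] EEP0'[of t x] t b0 by simp
    qed
    thus "WW b0 t x \<le> 0" using aap[of t] by (simp add: WW_def mult_nonneg_nonpos)
  qed
  have a0: "aa 0 = de * t0 powr (kr/2)"
  proof -
    have "zeta 0 = T^2 + ep^2" by (simp add: zeta_def)
    moreover have "(T^2 + ep^2) powr (q/2) * (T^2 + ep^2) powr (-q/2) = 1"
      using ep by (simp add: powr_add[symmetric])
    ultimately have "aa 0 = A * (T^2 + ep^2) powr (-q/2)" by (simp add: aa_def)
    also have "\<dots> = de * t0 powr (kr/2) * ((T^2 + ep^2) powr (q/2) * (T^2 + ep^2) powr (-q/2))"
      using Adef by (simp add: kr_def mult.assoc)
    also have "\<dots> = de * t0 powr (kr/2)" using \<open>(T^2 + ep^2) powr (q/2) * (T^2 + ep^2) powr (-q/2) = 1\<close> by simp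
    finally show ?thesis .
  qed
  have dP: "de * t0 powr (kr/2) * P0 = de"
    using t0 by (simp add: P0_def powr_add[symmetric])
  have init: "\<forall>x. WW b0 0 x < u 0 x"
  proof
    fix x
    have wdef: "WW b0 0 x = de * t0 powr (kr/2) * VV b0 0 x" by (simp add: WW_def a0)
    have dpos: "de * t0 powr (kr/2) > 0" using dr t0 by simp
    show "WW b0 0 x < u 0 x"
    proof (cases "dist x c < r")
      case True
      have "g * tau x \<ge> 0" using gp tau_nonneg[of x] by simp
      hence "VV b0 0 x < P0" using Vb[of 0 x] EEP0'[of 0 x] b0 by simp
      hence "WW b0 0 x < de * t0 powr (kr/2) * P0" unfolding wdef using dpos by (rule mult_strict_left_mono)
      hence "WW b0 0 x < de" using dP by simp
      moreover have "de < u0 x" using dr(3) True by blast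
      ultimately show ?thesis using u0eq by simp
    next
      case False
      hence "(dist x c)^2 \<ge> r^2" using dr(2) by (intro power_mono) auto
      hence rt: "rho x + tau x \<ge> r^2" using rho_tau[of x] by simp
      have "VV b0 0 x < 0"
      proof (cases "rho x \<ge> r^2/2")
        case True
        have "exp (- rho x / (4*(t0+0))) \<le> exp (- (r^2)/(8*t0))"
          using True t0 by (simp add: field_simps)
        hence "P0 * exp (- rho x / (4*(t0+0))) \<le> P0 * exp (- (r^2)/(8*t0))"
          using P0p by (intro mult_left_mono) auto
        hence "EE 0 x \<le> P0 * exp (- (r^2)/(8*t0))"
          using EEP0[of 0 x] by simp
        hence "EE 0 x < b0" using b0(2) by (simp add: P0_def kr_def)
        moreover have "g * tau x \<ge> 0" using gp tau_nonneg[of x] by simp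
        ultimately show ?thesis using Vb[of 0 x] by simp
      next
        case False
        hence "tau x \<ge> r^2/2" using rt by simp
        hence "g * tau x \<ge> g * (r^2/2)" using gp by (intro mult_left_mono) auto
        hence "g * tau x > P0" using g2 by (simp add: P0_def kr_def)
        thus ?thesis using Vb[of 0 x] EEP0'[of 0 x] b0 by simp
      qed
      hence "WW b0 0 x < 0" unfolding wdef using dpos by (simp add: mult_pos_neg)
      moreover have "u 0 x \<ge> 0" using upos by simp
      ultimately show ?thesis by simp
    qed
  qed
  have fin: "\<forall>x. WW b0 T1 x < u T1 x"
  proof
    fix x
    have "EE T1 x \<le> (t0 + T1) powr (- kr/2)"
    proof -
      have "exp (- rho x / (4*(t0+T1))) \<le> 1" using rho_nonneg[of x] t0 T1p by simp
      thus ?thesis unfolding EE_def cS by (simp add: mult_left_le)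
    qed
    also have "\<dots> \<le> (t0 + T) powr (- kr/2)"
      using T1p t0 T by (intro powr_mono2') (auto simp: kr_def)
    finally have E1: "EE T1 x \<le> (t0 + T) powr (- kr/2)" .
    have "C1 * T1 = C1 * T + (t0 + T) powr (- kr/2) + C1" using C1 by (simp add: T1_def field_simps)
    moreover have "C1 * T \<ge> 0" using C1 T by simp
    ultimately have "C1 * T1 > (t0 + T) powr (- kr/2)" using C1 by linarith
    moreover have "g * tau x \<ge> 0" using gp tau_nonneg[of x] by simp
    ultimately have "VV b0 T1 x < 0" using E1 b0 unfolding VV_def by linarith
    hence "WW b0 T1 x < 0" using aap[of T1] by (simp add: WW_def mult_pos_neg)
    moreover have "u T1 x \<ge> 0" using upos T1p by simp
    ultimately show "WW b0 T1 x < u T1 x" by linarith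
  qed
  have g1': "g \<ge> t0 powr (- real (card S)/2) / (4*t0)" using g1 prm(1) by simp
  have cmp: "\<forall>t\<in>{0..T1}. \<forall>x. WW b0 t x \<le> u t x"
    by (rule barrier_comparison[OF sup ucont upos prm(1-3) t0 ep Ap g1' prm(4,5) AC T1p(1)
        compact_cball Kprop init fin])
  have "WW b0 T c \<le> u T c" using cmp T T1p by auto
  moreover have "WW b0 T c = A * (ep^2) powr (-q/2) * ((t0 + T) powr (- real k/2) - b0 - C1 * T)"
    by (simp add: WW_def VV_def aa_def zeta_def EE_def rho_c tau_c cS kr_def)
  ultimately show False using big by simp
qed

end

lemma exp_small:
  fixes a C m :: real
  assumes "a > 0" "C > 0" "m \<ge> 0"
  shows "\<exists>t. 0 < t \<and> t \<le> 1 \<and> exp (- a / t) < C * t powr m"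
proof -
  define n where "n = nat \<lceil>m\<rceil> + 1"
  define nn where "nn = real n"
  have nge: "m \<le> real (n - 1)" using assms(3) by (simp add: n_def)
  have nn1: "nn \<ge> 1" by (simp add: nn_def n_def)
  define y where "y = nn ^ n / (a ^ n * C) + 1"
  have y1: "y \<ge> 1" using assms nn1 by (simp add: y_def)
  have ypos: "y > 0" using y1 by simp
  have ybig: "C * a ^ n * y / nn ^ n > 1"
  proof -
    have "y > nn ^ n / (a ^ n * C)" by (simp add: y_def)
    hence "y * (a ^ n * C) > nn ^ n" using assms by (simp add: field_simps)
    thus ?thesis using nn1 by (simp add: field_simps)
  qed
  have e1: "exp (a * y) \<ge> (a * y / nn) ^ n"
  proof -
    have "exp (a * y) = exp (a * y / nn) ^ n"
      using nn1 by (simp add: exp_of_nat_mult[symmetric] nn_def)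
    moreover have "a * y / nn \<le> exp (a * y / nn)"
      using exp_ge_add_one_self[of "a * y / nn"] by linarith
    moreover have "0 \<le> a * y / nn" using assms ypos nn1 by simp
    ultimately show ?thesis by (simp add: power_mono)
  qed
  have "y powr m \<le> y powr real (n - 1)" using y1 nge by (intro powr_mono) auto
  also have "\<dots> = y ^ (n - 1)" using ypos by (simp add: powr_realpow)
  also have "\<dots> < (C * a ^ n * y / nn ^ n) * y ^ (n - 1)"
  proof -
    have "y ^ (n - 1) > 0" using ypos by simp
    hence "1 * y ^ (n - 1) < (C * a ^ n * y / nn ^ n) * y ^ (n - 1)"
      using ybig by (intro mult_strict_right_mono) auto
    thus ?thesis by simp
  qed
  also have "\<dots> = C * (a * y / nn) ^ n"
  proof -
    have "y * y ^ (n - 1) = y ^ n" by (simp add: n_def)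
    thus ?thesis by (simp add: power_divide power_mult_distrib field_simps)
  qed
  also have "\<dots> \<le> C * exp (a * y)" using e1 assms by simp
  finally have main: "y powr m < C * exp (a * y)" .
  define t where "t = 1 / y"
  have tp: "0 < t" "t \<le> 1" using y1 by (auto simp: t_def)
  have "exp (- a / t) = 1 / exp (a * y)" by (simp add: t_def exp_minus field_simps)
  also have "\<dots> < C / y powr m" using main ypos by (simp add: field_simps)
  also have "\<dots> = C * t powr m" using ypos by (simp add: t_def powr_divide field_simps)
  finally show ?thesis using tp by blast
qed


theorem mainTheorem6:
  fixes u0 :: "real^'n \<Rightarrow> real" and k :: nat and p :: real
  assumes "CARD('n) \<ge> 2" and "1 \<le> k" and "k < CARD('n)"
    and "0 < p" and "p < 2 / real k"
    and "uniformly_continuous_on UNIV u0"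
    and "\<forall>x. u0 x \<ge> 0" and "\<exists>x. u0 x \<noteq> 0"
  shows "\<not> (\<exists>u. global_solution k p u0 u)"
proof
  assume "\<exists>u. global_solution k p u0 u"
  then obtain u where gs: "global_solution k p u0 u" by blast
  obtain c where "u0 c \<noteq> 0" using assms(8) by blast
  hence uc: "u0 c > 0" using assms(7) by (metis less_eq_real_def)
  define de where "de = u0 c / 2"
  have dep: "de > 0" using uc by (simp add: de_def)
  have "continuous_on UNIV u0" using assms(6) by (rule uniformly_continuous_imp_continuous)
  hence "continuous (at c) u0" by (simp add: continuous_on_eq_continuous_at)
  then obtain r where r: "r > 0" and rr: "\<forall>x. dist x c < r \<longrightarrow> dist (u0 x) (u0 c) < de"
    using dep unfolding continuous_at_eps_delta by blast
  have dr: "\<forall>x. dist x c < r \<longrightarrow> u0 x > de"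
  proof (intro allI impI)
    fix x assume "dist x c < r"
    hence "\<bar>u0 x - u0 c\<bar> < de" using rr by (simp add: dist_real_def)
    moreover have "u0 c - u0 x \<le> \<bar>u0 x - u0 c\<bar>" by simp
    ultimately show "u0 x > de" by (simp add: de_def)
  qed
  obtain S :: "'n set" where S: "card S = k"
    using obtain_subset_with_card_n[of k "UNIV :: 'n set"] assms(3) by auto
  define kr where "kr = real k"
  have kr1: "kr \<ge> 1" using assms(2) by (simp add: kr_def)
  define q where "q = 1 + 1/p"
  have q1: "q > 1" using assms(4) by (simp add: q_def)
  define th where "th = 1/p - kr/2"
  have thp: "th > 0"
  proof -
    have "p * kr < 2" using assms(5) kr1 by (simp add: kr_def pos_less_divide_eq mult.commute)
    hence "kr/2 < 1/p" using assms(4) by (simp add: field_simps)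
    thus ?thesis by (simp add: th_def)
  qed
  define K1 where "K1 = max 1 (8 * 2 powr (kr/2) * q powr q / de)"
  have K11: "K1 \<ge> 1" by (simp add: K1_def)
  have K1b: "de * K1 \<ge> 8 * 2 powr (kr/2) * q powr q"
  proof -
    have "K1 \<ge> 8 * 2 powr (kr/2) * q powr q / de" by (simp add: K1_def)
    thus ?thesis using dep by (simp add: field_simps)
  qed
  define Cc where "Cc = 2 powr (-kr/2) * K1 powr (-kr/(2*th)) / 4"
  have Ccp: "Cc > 0" using K11 by (simp add: Cc_def)
  define m where "m = kr/2 + kr^2/(4*th)"
  have m0: "m \<ge> 0" using kr1 thp by (simp add: m_def)
  have "r^2/8 > 0" using r by simp
  from exp_small[OF this Ccp m0] obtain t0 where t0: "0 < t0" "t0 \<le> 1"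
    and t0e: "exp (- (r^2/8) / t0) < Cc * t0 powr m" by blast
  define P0 where "P0 = t0 powr (- kr/2)"
  have P0p: "P0 > 0" using t0 by (simp add: P0_def)
  have tk: "t0 powr (kr/2) > 0" "t0 powr (kr/2) \<le> 1"
  proof -
    show "t0 powr (kr/2) > 0" using t0 by simp
    have "t0 powr (kr/2) \<le> 1 powr (kr/2)" using t0 kr1 by (intro powr_mono2) auto
    thus "t0 powr (kr/2) \<le> 1" by simp
  qed
  have P0tk: "P0 * t0 powr (kr/2) = 1" using t0 by (simp add: P0_def powr_add[symmetric])
  define L where "L = K1 / t0 powr (kr/2)"
  have L1: "L \<ge> 1"
  proof -
    have "K1 / t0 powr (kr/2) \<ge> K1 / 1" using tk K11 by (intro divide_left_mono) auto
    thus ?thesis using K11 by (simp add: L_def)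
  qed
  have tL: "t0 powr (kr/2) * L = K1" using tk by (simp add: L_def)
  define T where "T = L powr (1/th)"
  have T1: "T \<ge> 1" using L1 thp by (simp add: T_def ge_one_powr_ge_zero)
  have Tth: "T powr th = L" using L1 thp by (simp add: T_def powr_powr)
  have TK: "T powr (-kr/2) = K1 powr (-kr/(2*th)) * t0 powr (kr^2/(4*th))"
  proof -
    have e1: "1/th * (-kr/2) = -kr/(2*th)" by simp
    have e2: "kr/2 * (-kr/(2*th)) = -(kr^2/(4*th))" by (simp add: power2_eq_square)
    have "T powr (-kr/2) = L powr (-kr/(2*th))" unfolding T_def by (subst powr_powr) (simp only: e1)
    also have "\<dots> = K1 powr (-kr/(2*th)) / (t0 powr (kr/2)) powr (-kr/(2*th))"
      unfolding L_def by (rule powr_divide)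
    also have "(t0 powr (kr/2)) powr (-kr/(2*th)) = t0 powr (- (kr^2/(4*th)))"
      by (subst powr_powr) (simp only: e2)
    also have "K1 powr (-kr/(2*th)) / t0 powr (- (kr^2/(4*th))) = K1 powr (-kr/(2*th)) * t0 powr (kr^2/(4*th))"
    proof -
      have "t0 powr (- (kr^2/(4*th))) = inverse (t0 powr (kr^2/(4*th)))" by (rule powr_minus)
      thus ?thesis by (simp only: divide_inverse inverse_inverse_eq)
    qed
    finally show ?thesis .
  qed
  define b0 where "b0 = (2*T) powr (-kr/2) / 4"
  have b0e: "b0 = 2 powr (-kr/2) * T powr (-kr/2) / 4" using T1 by (simp add: b0_def powr_mult)
  have b0p: "b0 > 0" using T1 by (simp add: b0_def)
  have iii: "t0 powr (- real k/2) * exp (- (r^2)/(8*t0)) < b0"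
  proof -
    have pm: "t0 powr m = t0 powr (kr/2) * t0 powr (kr^2/(4*th))" unfolding m_def by (rule powr_add)
    have "Cc * t0 powr m = t0 powr (kr/2) * b0"
      unfolding pm b0e TK Cc_def by (simp add: algebra_simps)
    hence "exp (- (r^2)/(8*t0)) < t0 powr (kr/2) * b0" using t0e by (simp add: field_simps)
    hence "P0 * exp (- (r^2)/(8*t0)) < P0 * (t0 powr (kr/2) * b0)" using P0p by simp
    thus ?thesis using P0tk by (simp add: P0_def kr_def mult.assoc[symmetric])
  qed
  define Alo where "Alo = de * t0 powr (kr/2) * T powr q"
  have Alop: "Alo > 0" using dep tk T1 by (simp add: Alo_def)
  define C1 where "C1 = 2 * q powr q / Alo"
  have C1p: "C1 > 0" using Alop q1 by (simp add: C1_def)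
  have C1T: "C1 * T \<le> b0"
  proof -
    have Tq: "T / T powr q = T powr (-kr/2) / L"
    proof -
      have "T / T powr q = T powr (1 - q)" using T1 by (simp add: powr_diff)
      also have "1 - q = -kr/2 - th" by (simp add: q_def th_def)
      also have "T powr (-kr/2 - th) = T powr (-kr/2) / L" using T1 Tth by (simp add: powr_diff)
      finally show ?thesis .
    qed
    have "C1 * T = 2 * q powr q / (de * t0 powr (kr/2)) * (T / T powr q)"
      by (simp add: C1_def Alo_def field_simps)
    also have "\<dots> = 2 * q powr q * T powr (-kr/2) / (de * (t0 powr (kr/2) * L))"
      unfolding Tq by (simp add: field_simps)
    also have "\<dots> = 2 * q powr q * T powr (-kr/2) / (de * K1)" by (simp add: tL)
    also have "\<dots> \<le> 2 * q powr q * T powr (-kr/2) / (8 * 2 powr (kr/2) * q powr q)"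
    proof -
      have "0 < 8 * 2 powr (kr/2) * q powr q" using q1 by simp
      moreover have "0 \<le> 2 * q powr q * T powr (-kr/2)" by simp
      ultimately show ?thesis using K1b K11 dep by (intro divide_left_mono) (auto intro: mult_pos_pos)
    qed
    also have "\<dots> = b0"
    proof -
      have "2 powr (-kr/2) * 2 powr (kr/2) = 1" by (simp add: powr_add[symmetric])
      hence "2 powr (-kr/2) = 1 / 2 powr (kr/2)" by (simp add: field_simps)
      thus ?thesis using q1 unfolding b0e by (simp add: field_simps)
    qed
    finally show ?thesis .
  qed
  define fT where "fT = (t0 + T) powr (- real k/2) - b0 - C1 * T"
  have fTp: "fT \<ge> 2 * b0"
  proof -
    have "(2*T) powr (-kr/2) \<le> (t0 + T) powr (-kr/2)"
      using t0 T1 kr1 by (intro powr_mono2') auto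
    hence "4 * b0 \<le> (t0 + T) powr (- real k/2)" by (simp add: b0_def kr_def)
    thus ?thesis using C1T by (simp add: fT_def)
  qed
  have fTpos: "fT > 0" using fTp b0p by simp
  define M where "M = u T c"
  define ep where "ep = (Alo * fT / (2 * (\<bar>M\<bar> + 1))) powr (1/q)"
  have Xp: "Alo * fT / (2 * (\<bar>M\<bar> + 1)) > 0" using Alop fTpos by simp
  have epp: "ep > 0"
  proof -
    have "Alo * fT / (2 * (\<bar>M\<bar> + 1)) \<noteq> 0" using Xp by linarith
    thus ?thesis unfolding ep_def by (simp only: powr_gt_zero) simp
  qed
  have epq: "ep powr q = Alo * fT / (2 * (\<bar>M\<bar> + 1))"
  proof -
    have "ep powr q = (Alo * fT / (2 * (\<bar>M\<bar> + 1))) powr (1/q * q)" unfolding ep_def by (rule powr_powr)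
    also have "1/q * q = 1" using q1 by simp
    finally show ?thesis using Xp Alop fTpos by simp
  qed
  define A where "A = de * t0 powr (real k/2) * (T^2 + ep^2) powr (q/2)"
  have AAlo: "A \<ge> Alo"
  proof -
    have "(T^2) powr (q/2) = T powr q"
    proof -
      have "T^2 = T powr 2" using T1 by (simp add: powr_realpow)
      hence "(T^2) powr (q/2) = (T powr 2) powr (q/2)" by simp
      also have "\<dots> = T powr (2 * (q/2))" by (rule powr_powr)
      finally show ?thesis by simp
    qed
    moreover have "(T^2) powr (q/2) \<le> (T^2 + ep^2) powr (q/2)" using q1 by (intro powr_mono2) auto
    ultimately have "T powr q \<le> (T^2 + ep^2) powr (q/2)" by simp
    thus ?thesis unfolding A_def Alo_def kr_def using dep tk by (simp add: kr_def)
  qed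
  have AC: "A * C1 > q powr q"
  proof -
    have "A * C1 \<ge> Alo * C1" using AAlo C1p by (simp add: mult_right_mono)
    moreover have "Alo * C1 = 2 * q powr q" using Alop by (simp add: C1_def)
    moreover have "q powr q > 0" using q1 by simp
    ultimately show ?thesis by linarith
  qed
  have big: "A * (ep^2) powr (-q/2) * fT > M"
  proof -
    have "(ep^2) powr (-q/2) = 1 / ep powr q"
    proof -
      have "ep^2 = ep powr 2" using epp by (simp add: powr_realpow)
      hence "(ep^2) powr (-q/2) = (ep powr 2) powr (-q/2)" by simp
      also have "\<dots> = ep powr (2 * (-q/2))" by (rule powr_powr)
      also have "2 * (-q/2) = - q" by simp
      also have "ep powr (- q) = inverse (ep powr q)" by (rule powr_minus)
      finally show ?thesis by (simp only: inverse_eq_divide)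
    qed
    hence e: "(ep^2) powr (-q/2) = 2 * (\<bar>M\<bar> + 1) / (Alo * fT)" using epq by simp
    have "A * (ep^2) powr (-q/2) * fT \<ge> Alo * (ep^2) powr (-q/2) * fT"
      using AAlo fTpos e Alop by (intro mult_right_mono) (auto simp: e)
    also have "Alo * (ep^2) powr (-q/2) * fT = 2 * (\<bar>M\<bar> + 1)" unfolding e using Alop fTpos by simp
    finally have h: "2 * (\<bar>M\<bar> + 1) \<le> A * (ep^2) powr (-q/2) * fT" .
    have "M < 2 * (\<bar>M\<bar> + 1)" by (simp add: abs_if)
    from this h show ?thesis by (rule less_le_trans)
  qed
  define g where "g = P0 / (4*t0) + 2 * P0 / r^2 + 1"
  have g1: "g \<ge> t0 powr (- real k/2) / (4*t0)" using P0p r by (simp add: g_def P0_def kr_def)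
  have g2: "g * r^2 > 2 * t0 powr (- real k/2)"
  proof -
    have "g * r^2 = P0 / (4*t0) * r^2 + 2 * P0 + r^2" using r by (simp add: g_def field_simps)
    moreover have "P0 / (4*t0) * r^2 \<ge> 0" using P0p t0 by simp
    moreover have "r^2 > 0" using r by simp
    ultimately have "g * r^2 > 2 * P0" by linarith
    thus ?thesis by (simp add: P0_def kr_def)
  qed
  have T0: "0 \<le> T" using T1 by simp
  have big': "u T c < A * (ep^2) powr (-q/2) * ((t0 + T) powr (- real k/2) - b0 - C1 * T)"
    using big by (simp add: M_def fT_def)
  show False
    by (rule contra[OF gs S assms(2,3,4) q_def dep r dr t0(1) epp T0 A_def AC C1p g1 g2 b0p iii big'])
qed
end
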